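(* Let $\mathcal X\subseteq\mathbb R^n$, $\bm c\in\mathbb R^n$, $\varepsilon\in(0,1)$, scenarios $\bm\xi^1,\dots,\bm\xi^N$ with probabilities $p_i\ge0$, $\sum_ip_i=1$, and $g(\bm x,\bm\xi)=\max_{j\in[J]}g_j(\bm x,\bm\xi)$. Let $\bm x^*$ be an optimal solution of $$v^*=\min_{\bm x\in\mathcal X}\Big\{\bm c^\top\bm x:\ \sum_{i=1}^Np_i\mathbb I[g(\bm x,\bm\xi^i)\le0]\ge1-\varepsilon\Big\},$$ and define $I^*=\{i\in[N]: g(\bm x^*,\bm\xi^i)\le0\}$. Suppose either (A) $\sum_{i\in[N]:\,g(\bm x^*,\bm\xi^i)<0}p_i>1-\varepsilon$; or (B) $\mathcal X$ is convex, $g(\cdot,\bm\xi^i)$ is convex for all $i\in I^*$, and there exists $\bar I\subseteq I^*$ such that for each $i\in\bar I$ there is $\bm x^i\in\mathcal X$ with $g(\bm x^i,\bm\xi^{i'})\le0$ for all $i'\in I^*$ and $g(\bm x^i,\bm\xi^i)<0$, and $\sum_{i\in\bar I}p_i>1-\varepsilon$. Then $$v^*=\inf\big\{v^{\mathrm{CVaR}}(\bm\alpha):\ \alpha_i=1,\ i\in[N]\setminus I^*,\ \ \alpha_i\ge1,\ i\in I^*\big\}.$$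
   Context: $\mathbb I[\cdot]$ is the indicator function. For $\bm\alpha\ge\bm e$ (all-ones vector), $v^{\mathrm{CVaR}}(\bm\alpha)=\min_{\bm x\in\mathcal X,\beta\le0,\bm s\ge\bm0}\{\bm c^\top\bm x:\ \varepsilon\beta+\sum_ip_is_i\le0,\ s_i+\beta\ge\alpha_ig(\bm x,\bm\xi^i),\ i\in[N]\}$, with value $+\infty$ if infeasible. *)

theory Defs
  imports "HOL-Analysis.Analysis"
begin

definition gmax :: "nat \<Rightarrow> (nat \<Rightarrow> 'x \<Rightarrow> 'b \<Rightarrow> real) \<Rightarrow> 'x \<Rightarrow> 'b \<Rightarrow> real" where
  "gmax J gj x \<xi> = Max ((\<lambda>j. gj j x \<xi>) ` {1..J})"

text \<open>Optimal value of the CVaR approximation with scaling vector alpha;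
  the minimum is read as an infimum in the extended reals (+infinity if infeasible).\<close>
definition vCVaR ::
  "('a::real_inner) set \<Rightarrow> 'a \<Rightarrow> real \<Rightarrow> nat \<Rightarrow> (nat \<Rightarrow> real) \<Rightarrow> ('a \<Rightarrow> 'b \<Rightarrow> real)
   \<Rightarrow> (nat \<Rightarrow> 'b) \<Rightarrow> (nat \<Rightarrow> real) \<Rightarrow> ereal" where
  "vCVaR X c \<epsilon> N p g \<xi> \<alpha> =
     Inf {ereal (c \<bullet> x) | x \<beta> s. x \<in> X \<and> \<beta> \<le> 0 \<and> (\<forall>i\<in>{1..N}. s i \<ge> 0) \<and>
          \<epsilon> * \<beta> + (\<Sum>i=1..N. p i * s i) \<le> 0 \<and>
          (\<forall>i\<in>{1..N}. s i + \<beta> \<ge> \<alpha> i * g x (\<xi> i))}"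

end

theory Submission
  imports Defs
begin

lemma chance:
  fixes G s \<alpha> p :: "nat \<Rightarrow> real" and \<beta> \<epsilon> :: real
  assumes e: "0<\<epsilon>" and b: "\<beta> \<le> 0" and s0: "\<forall>i\<in>{1..N}. s i \<ge> 0"
    and cs: "\<epsilon>*\<beta> + (\<Sum>i=1..N. p i * s i) \<le> 0"
    and sg: "\<forall>i\<in>{1..N}. s i + \<beta> \<ge> \<alpha> i * G i"
    and ap: "\<forall>i\<in>{1..N}. \<alpha> i > 0" and p0: "\<forall>i\<in>{1..N}. p i \<ge> 0"
    and p1: "(\<Sum>i=1..N. p i) = 1"
  shows "(\<Sum>i=1..N. p i * (if G i \<le> 0 then 1 else 0)) \<ge> 1 - \<epsilon>"
proof -
  have "(\<Sum>i=1..N. p i * (if G i \<le> 0 then 1 else 0)) + (\<Sum>i=1..N. p i * (if G i > 0 then 1 else 0))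
     = (\<Sum>i=1..N. p i)" by (subst sum.distrib[symmetric]) (rule sum.cong, auto)
  hence split: "(\<Sum>i=1..N. p i * (if G i \<le> 0 then 1 else 0)) = 1 - (\<Sum>i=1..N. p i * (if G i > 0 then 1 else 0))"
    using p1 by linarith
  have viol: "(\<Sum>i=1..N. p i * (if G i > 0 then 1 else 0)) \<le> \<epsilon>"
  proof (cases "\<beta> < 0")
    case True
    have "(\<Sum>i=1..N. p i * (if G i > 0 then 1 else 0)) * (-\<beta>) = (\<Sum>i=1..N. p i * (if G i > 0 then 1 else 0) * (-\<beta>))"
      by (simp add: sum_distrib_right sum_negf)
    also have "\<dots> \<le> (\<Sum>i=1..N. p i * s i)"
    proof (rule sum_mono)
      fix i assume i: "i \<in> {1..N}"
      show "p i * (if G i > 0 then 1 else 0) * (-\<beta>) \<le> p i * s i"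
      proof (cases "G i > 0")
        case True
        have "\<alpha> i * G i > 0" using ap i True by simp
        hence "-\<beta> \<le> s i" using sg i by force
        thus ?thesis using True p0 i mult_left_mono[of "-\<beta>" "s i" "p i"] by simp
      next
        case False thus ?thesis using p0 s0 i by simp
      qed
    qed
    also have "\<dots> \<le> \<epsilon> * (-\<beta>)" using cs by simp
    finally show ?thesis using True by simp
  next
    case False
    hence b0: "\<beta> = 0" using b by simp
    have nn: "\<forall>i\<in>{1..N}. 0 \<le> p i * s i" using p0 s0 by simp
    have "0 \<le> (\<Sum>i=1..N. p i * s i)" by (rule sum_nonneg) (use nn in auto)
    hence "(\<Sum>i=1..N. p i * s i) = 0" using cs b0 by simp
    hence z: "\<forall>i\<in>{1..N}. p i * s i = 0"
      using sum_nonneg_eq_0_iff[of "{1..N}" "\<lambda>i. p i * s i"] nn by simp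
    have "(\<Sum>i=1..N. p i * (if G i > 0 then 1 else 0)) = 0"
    proof (rule sum.neutral, rule ballI)
      fix i assume i: "i \<in> {1..N}"
      show "p i * (if G i > 0 then 1 else 0) = 0"
      proof (cases "G i > 0")
        case True
        have "\<alpha> i * G i > 0" using ap i True by simp
        hence "s i > 0" using sg i b0 by force
        moreover have "p i * s i = 0" using z i by blast
        ultimately show ?thesis using True by simp
      qed simp
    qed
    thus ?thesis using e by simp
  qed
  show ?thesis unfolding split using viol by (rule diff_left_mono)
qed

lemma constr:
  fixes X :: "'a::real_inner set" and g :: "'a \<Rightarrow> 'b \<Rightarrow> real"
  assumes yX: "y \<in> X" and KI: "K \<subseteq> I" and IN: "I \<subseteq> {1..N}"
    and Kneg: "\<forall>i\<in>K. g y (\<xi> i) < 0" and PK: "(\<Sum>i\<in>K. p i) > 1-\<epsilon>"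
    and p0: "\<forall>i\<in>{1..N}. p i \<ge> 0" and p1: "(\<Sum>i=1..N. p i) = 1" and e: "\<epsilon> > 0"
  shows "\<exists>\<alpha>. (\<forall>i\<in>{1..N}-I. \<alpha> i = 1) \<and> (\<forall>i\<in>I. \<alpha> i \<ge> 1) \<and> vCVaR X c \<epsilon> N p g \<xi> \<alpha> \<le> ereal (c \<bullet> y)"
proof -
  define G where "G i = g y (\<xi> i)" for i
  define D where "D = (\<Sum>i=1..N. p i * \<bar>G i\<bar>)"
  define gap where "gap = \<epsilon> - (1 - (\<Sum>i\<in>K. p i))"
  define t where "t = D / gap + 1"
  define M where "M = 1 + (\<Sum>i\<in>K. t / (- G i))"
  define \<alpha> where "\<alpha> i = (if i \<in> K then M else 1)" for i
  define s where "s i = max 0 (\<alpha> i * G i + t)" for i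
  have finK: "finite K" by (rule finite_subset[OF subset_trans[OF KI IN]]) simp
  have gap: "gap > 0" using PK gap_def by simp
  have D0: "D \<ge> 0" unfolding D_def by (rule sum_nonneg) (use p0 in auto)
  have t0: "t > 0" unfolding t_def using divide_nonneg_pos[OF D0 gap] by linarith
  have tn: "t / (- G i) \<ge> 0" if "i \<in> K" for i
    by (rule divide_nonneg_pos) (use Kneg that t0 G_def in auto)
  have "0 \<le> (\<Sum>i\<in>K. t / (- G i))" by (rule sum_nonneg) (rule tn)
  hence Mge: "M \<ge> 1" unfolding M_def by linarith
  have Mk: "M * (- G i) \<ge> t" if i: "i \<in> K" for i
  proof -
    have "t / (- G i) \<le> (\<Sum>i\<in>K. t / (- G i))"
      by (rule member_le_sum[OF i _ finK]) (rule tn, blast)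
    hence "t / (- G i) \<le> M" unfolding M_def by simp
    moreover have "- G i > 0" using Kneg i G_def by simp
    ultimately have "t / (- G i) * (- G i) \<le> M * (- G i)" by (intro mult_right_mono) auto
    moreover have "t / (- G i) * (- G i) = t" using \<open>- G i > 0\<close> by simp
    ultimately show ?thesis by simp
  qed
  have per: "p i * s i \<le> (if i \<in> K then 0 else p i * \<bar>G i\<bar> + t * p i)" if i: "i \<in> {1..N}" for i
  proof (cases "i \<in> K")
    case True
    hence "\<alpha> i * G i + t \<le> 0" using Mk[OF True] \<alpha>_def by (simp add: algebra_simps)
    thus ?thesis using True s_def by simp
  next
    case False
    have "s i \<le> \<bar>G i\<bar> + t" using False s_def \<alpha>_def t0 by auto
    hence "p i * s i \<le> p i * (\<bar>G i\<bar> + t)" using p0 i mult_left_mono by blast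
    thus ?thesis using False by (simp add: algebra_simps)
  qed
  have sK: "(\<Sum>i=1..N. (if i \<in> K then p i else 0)) = (\<Sum>i\<in>K. p i)"
  proof -
    have "(\<Sum>i=1..N. (if i \<in> K then p i else 0)) = (\<Sum>i\<in>{1..N} \<inter> K. p i)"
      by (simp add: sum.inter_restrict)
    also have "{1..N} \<inter> K = K" using KI IN by blast
    finally show ?thesis .
  qed
  have "(\<Sum>i=1..N. p i * s i) \<le> (\<Sum>i=1..N. (if i \<in> K then 0 else p i * \<bar>G i\<bar> + t * p i))"
    by (rule sum_mono) (rule per)
  also have "\<dots> \<le> (\<Sum>i=1..N. p i * \<bar>G i\<bar> + t * (p i - (if i \<in> K then p i else 0)))"
    by (rule sum_mono) (use p0 in auto)
  also have "\<dots> = D + t * (1 - (\<Sum>i\<in>K. p i))"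
    using sK p1 by (simp add: D_def sum.distrib sum_distrib_left[symmetric] sum_subtractf)
  also have "\<dots> \<le> \<epsilon> * t"
  proof -
    have h1: "gap * t = D + gap" unfolding t_def using gap by (simp add: field_simps)
    have h2: "\<epsilon> * t - (D + t * (1 - (\<Sum>i\<in>K. p i))) = gap * t - D"
      unfolding gap_def by (simp add: algebra_simps)
    show ?thesis using h1 h2 gap by linarith
  qed
  finally have cs: "\<epsilon> * (-t) + (\<Sum>i=1..N. p i * s i) \<le> 0" by simp
  have mem: "ereal (c \<bullet> y) \<in> {ereal (c \<bullet> x) | x \<beta> s. x \<in> X \<and> \<beta> \<le> 0 \<and> (\<forall>i\<in>{1..N}. s i \<ge> 0) \<and>
          \<epsilon> * \<beta> + (\<Sum>i=1..N. p i * s i) \<le> 0 \<and>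
          (\<forall>i\<in>{1..N}. s i + \<beta> \<ge> \<alpha> i * g x (\<xi> i))}"
    using yX t0 cs by (auto simp: s_def G_def intro!: exI[of _ y] exI[of _ "-t"] exI[of _ s])
  hence "vCVaR X c \<epsilon> N p g \<xi> \<alpha> \<le> ereal (c \<bullet> y)"
    unfolding vCVaR_def by (rule Inf_lower)
  moreover have "\<forall>i\<in>{1..N}-I. \<alpha> i = 1" using KI \<alpha>_def by auto
  moreover have "\<forall>i\<in>I. \<alpha> i \<ge> 1" using Mge \<alpha>_def by auto
  ultimately show ?thesis by blast
qed


theorem corollary3:
  fixes X :: "(real ^ 'n) set" and c :: "real ^ 'n" and \<epsilon> :: real
    and N J :: nat and \<xi> :: "nat \<Rightarrow> 'b" and p :: "nat \<Rightarrow> real"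
    and gj :: "nat \<Rightarrow> real ^ 'n \<Rightarrow> 'b \<Rightarrow> real"
    and xstar :: "real ^ 'n"
  defines "g \<equiv> gmax J gj"
  defines "Istar \<equiv> {i\<in>{1..N}. g xstar (\<xi> i) \<le> 0}"
  assumes eps: "0 < \<epsilon>" "\<epsilon> < 1"
    and J: "J \<ge> 1"
    and p_nonneg: "\<forall>i\<in>{1..N}. p i \<ge> 0"
    and p_sum: "(\<Sum>i=1..N. p i) = 1"
    and xstar_feas: "xstar \<in> X"
      "(\<Sum>i=1..N. p i * (if g xstar (\<xi> i) \<le> 0 then 1 else 0)) \<ge> 1 - \<epsilon>"
    and xstar_opt: "\<forall>x\<in>X. (\<Sum>i=1..N. p i * (if g x (\<xi> i) \<le> 0 then 1 else 0)) \<ge> 1 - \<epsilon>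
                       \<longrightarrow> c \<bullet> xstar \<le> c \<bullet> x"
    and AB: "(\<Sum>i\<in>{i\<in>{1..N}. g xstar (\<xi> i) < 0}. p i) > 1 - \<epsilon>
           \<or> (convex X \<and> (\<forall>i\<in>Istar. convex_on UNIV (\<lambda>x. g x (\<xi> i))) \<and>
              (\<exists>Ibar \<subseteq> Istar.
                 (\<forall>i\<in>Ibar. \<exists>xi\<in>X. (\<forall>i'\<in>Istar. g xi (\<xi> i') \<le> 0) \<and> g xi (\<xi> i) < 0) \<and>
                 (\<Sum>i\<in>Ibar. p i) > 1 - \<epsilon>))"
  shows "ereal (c \<bullet> xstar) =
    Inf {vCVaR X c \<epsilon> N p g \<xi> \<alpha> | \<alpha>.
           (\<forall>i\<in>{1..N} - Istar. \<alpha> i = 1) \<and> (\<forall>i\<in>Istar. \<alpha> i \<ge> 1)}"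
proof -
  have p0: "\<forall>i\<in>{1..N}. p i \<ge> 0" by fact
  have IN: "Istar \<subseteq> {1..N}" unfolding Istar_def by auto
  have lower: "ereal (c \<bullet> xstar) \<le> Inf {vCVaR X c \<epsilon> N p g \<xi> \<alpha> | \<alpha>.
           (\<forall>i\<in>{1..N} - Istar. \<alpha> i = 1) \<and> (\<forall>i\<in>Istar. \<alpha> i \<ge> 1)}"
  proof (rule Inf_greatest, clarify)
    fix \<alpha> :: "nat \<Rightarrow> real"
    assume a1: "\<forall>i\<in>{1..N} - Istar. \<alpha> i = 1" and a2: "\<forall>i\<in>Istar. \<alpha> i \<ge> 1"
    have ap: "\<forall>i\<in>{1..N}. \<alpha> i > 0"
    proof
      fix i assume "i \<in> {1..N}"
      thus "\<alpha> i > 0" using a1 a2 by (cases "i \<in> Istar") force+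
    qed
    show "ereal (c \<bullet> xstar) \<le> vCVaR X c \<epsilon> N p g \<xi> \<alpha>"
      unfolding vCVaR_def
    proof (rule Inf_greatest, clarify)
      fix x \<beta> and s :: "nat \<Rightarrow> real"
      assume x: "x \<in> X" "\<beta> \<le> 0" "\<forall>i\<in>{1..N}. s i \<ge> 0"
        "\<epsilon> * \<beta> + (\<Sum>i=1..N. p i * s i) \<le> 0"
        "\<forall>i\<in>{1..N}. s i + \<beta> \<ge> \<alpha> i * g x (\<xi> i)"
      have "(\<Sum>i=1..N. p i * (if g x (\<xi> i) \<le> 0 then 1 else 0)) \<ge> 1 - \<epsilon>"
        by (rule chance[of \<epsilon> \<beta> N s p \<alpha> "\<lambda>i. g x (\<xi> i)"]) (use x eps ap p_nonneg p_sum in auto)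
      thus "ereal (c \<bullet> xstar) \<le> ereal (c \<bullet> x)" using xstar_opt x by simp
    qed
  qed
  let ?S = "{vCVaR X c \<epsilon> N p g \<xi> \<alpha> | \<alpha>.
           (\<forall>i\<in>{1..N} - Istar. \<alpha> i = 1) \<and> (\<forall>i\<in>Istar. \<alpha> i \<ge> 1)}"
  have key: "Inf ?S \<le> ereal (c \<bullet> y)"
    if kh: "y \<in> X" "K \<subseteq> Istar" "\<forall>i\<in>K. g y (\<xi> i) < 0" "(\<Sum>i\<in>K. p i) > 1-\<epsilon>" for y K
  proof -
    obtain \<alpha> where a: "(\<forall>i\<in>{1..N}-Istar. \<alpha> i = 1)" "(\<forall>i\<in>Istar. \<alpha> i \<ge> 1)"
      "vCVaR X c \<epsilon> N p g \<xi> \<alpha> \<le> ereal (c \<bullet> y)"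
      using constr[where X=X and K=K and I=Istar and N=N and g=g and \<xi>=\<xi> and p=p and \<epsilon>=\<epsilon> and y=y and c=c, OF kh(1,2) IN kh(3,4) p_nonneg p_sum eps(1)] by blast
    have "Inf ?S \<le> vCVaR X c \<epsilon> N p g \<xi> \<alpha>" by (rule Inf_lower) (use a in blast)
    thus ?thesis using a(3) by simp
  qed
  have upper: "Inf ?S \<le> ereal (c \<bullet> xstar)"
  proof (cases "(\<Sum>i\<in>{i\<in>{1..N}. g xstar (\<xi> i) < 0}. p i) > 1 - \<epsilon>")
    case True
    show ?thesis
      by (rule key[OF xstar_feas(1) _ _ True]) (auto simp: Istar_def)
  next
    case False
    with AB have cX: "convex X" and cg: "\<forall>i\<in>Istar. convex_on UNIV (\<lambda>x. g x (\<xi> i))"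
      and "\<exists>Ibar \<subseteq> Istar.
                 (\<forall>i\<in>Ibar. \<exists>xi\<in>X. (\<forall>i'\<in>Istar. g xi (\<xi> i') \<le> 0) \<and> g xi (\<xi> i) < 0) \<and>
                 (\<Sum>i\<in>Ibar. p i) > 1 - \<epsilon>" by blast+
    then obtain Ibar where IB: "Ibar \<subseteq> Istar"
      "\<forall>i\<in>Ibar. \<exists>xi\<in>X. (\<forall>i'\<in>Istar. g xi (\<xi> i') \<le> 0) \<and> g xi (\<xi> i) < 0"
      "(\<Sum>i\<in>Ibar. p i) > 1 - \<epsilon>" by blast
    have IB2: "\<forall>i\<in>Ibar. \<exists>xi. xi \<in> X \<and> (\<forall>i'\<in>Istar. g xi (\<xi> i') \<le> 0) \<and> g xi (\<xi> i) < 0"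
      using IB(2) by blast
    from bchoice[OF IB2] obtain f where f: "\<forall>i\<in>Ibar. f i \<in> X \<and> (\<forall>i'\<in>Istar. g (f i) (\<xi> i') \<le> 0) \<and> g (f i) (\<xi> i) < 0"
      by blast
    have finB: "finite Ibar" by (rule finite_subset[OF subset_trans[OF IB(1) IN]]) simp
    have neB: "Ibar \<noteq> {}"
    proof
      assume "Ibar = {}"
      with IB(3) eps show False by simp
    qed
    define n where "n = real (card Ibar)"
    have n0: "n > 0" using finB neB by (simp add: n_def card_gt_0_iff)
    define xb where "xb = (\<Sum>k\<in>Ibar. (1/n) *\<^sub>R f k)"
    have s1: "(\<Sum>k\<in>Ibar. 1/n) = 1" using n0 n_def by simp
    have xbX: "xb \<in> X" unfolding xb_def
      by (rule convex_sum[OF finB cX s1]) (use n0 f in auto)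
    have xbneg: "g xb (\<xi> i) < 0" if i: "i \<in> Ibar" for i
    proof -
      have "g xb (\<xi> i) \<le> (\<Sum>k\<in>Ibar. (1/n) * g (f k) (\<xi> i))"
        unfolding xb_def
        by (rule convex_on_sum[OF finB neB _ s1, where C=UNIV]) (use cg IB(1) i n0 in auto)
      also have "\<dots> = (1/n) * g (f i) (\<xi> i) + (\<Sum>k\<in>Ibar-{i}. (1/n) * g (f k) (\<xi> i))"
        by (rule sum.remove[OF finB i])
      also have "\<dots> \<le> (1/n) * g (f i) (\<xi> i)"
      proof -
        have "(\<Sum>k\<in>Ibar-{i}. (1/n) * g (f k) (\<xi> i)) \<le> 0"
        proof (rule sum_nonpos)
          fix k assume k: "k \<in> Ibar - {i}"
          have "g (f k) (\<xi> i) \<le> 0" using f k IB(1) i by blast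
          thus "(1/n) * g (f k) (\<xi> i) \<le> 0" by (intro mult_nonneg_nonpos) (use n0 in auto)
        qed
        thus ?thesis by simp
      qed
      also have "\<dots> < 0"
      proof -
        have "g (f i) (\<xi> i) < 0" using f i by blast
        thus ?thesis by (intro mult_pos_neg) (use n0 in auto)
      qed
      finally show ?thesis .
    qed
    show ?thesis
    proof (rule ereal_le_epsilon2)
      fix e :: real assume e: "0 < e"
      define d where "d = c \<bullet> xb - c \<bullet> xstar"
      define l where "l = min 1 (e / (\<bar>d\<bar> + 1))"
      have l0: "l > 0" "l \<le> 1" using e l_def by auto
      define y where "y = (1 - l) *\<^sub>R xstar + l *\<^sub>R xb"
      have yX: "y \<in> X" unfolding y_def by (rule convexD[OF cX xstar_feas(1) xbX]) (use l0 in auto)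
      have yneg: "\<forall>i\<in>Ibar. g y (\<xi> i) < 0"
      proof
        fix i assume i: "i \<in> Ibar"
        have "g y (\<xi> i) \<le> (1 - l) * g xstar (\<xi> i) + l * g xb (\<xi> i)"
          unfolding y_def by (rule convex_onD[OF cg[rule_format]]) (use IB(1) i l0 in auto)
        moreover have "g xstar (\<xi> i) \<le> 0" using IB(1) i Istar_def by auto
        moreover have "l * g xb (\<xi> i) < 0" using xbneg[OF i] l0 by (simp add: mult_pos_neg)
        moreover have "(1 - l) * g xstar (\<xi> i) \<le> 0" using l0 calculation(2) by (simp add: mult_nonneg_nonpos)
        ultimately show "g y (\<xi> i) < 0" by linarith
      qed
      have "Inf ?S \<le> ereal (c \<bullet> y)" by (rule key[OF yX IB(1) yneg IB(3)])
      also have "c \<bullet> y = c \<bullet> xstar + l * d"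
        unfolding y_def d_def by (simp add: inner_add_right algebra_simps)
      also have "l * d \<le> e"
      proof -
        have "l * d \<le> l * \<bar>d\<bar>" using l0 by (simp add: mult_left_mono)
        also have "\<dots> \<le> e / (\<bar>d\<bar> + 1) * \<bar>d\<bar>" by (rule mult_right_mono) (simp_all add: l_def)
        also have "\<dots> \<le> e" using e by (simp add: field_simps)
        finally show ?thesis .
      qed
      hence "ereal (c \<bullet> xstar + l * d) \<le> ereal (c \<bullet> xstar) + ereal e" by simp
      finally show "Inf ?S \<le> ereal (c \<bullet> xstar) + ereal e" .
    qed
  qed
  show ?thesis using lower upper by (rule antisym)
qed

end
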